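(* Let $n\ge2$ and let $\Gamma:\mathbb{C}^n\to\mathbb{C}^n$ be a homogeneous quadratic polynomial map with real coefficients such that $\Gamma(x)$ and $x$ are linearly dependent for every $x\in C$. Then there exist $b\in\mathbb{R}^n$ and a real linear functional $\lambda$ on $\mathbb{R}^n$ such that $\Gamma(x)=(x,x)\,b+\lambda(x)\,x$ for all $x$.
   Context: $(\cdot,\cdot)$ denotes the standard Euclidean inner product on $\mathbb{R}^n$, extended to $\mathbb{C}^n$ complex-bilinearly; $\lambda$ is extended complex-linearly. The *asymptotic cone* is $C=\{x\in\mathbb{C}^n:(x,x)=0\}$. *)

theory Defs
  imports "HOL-Analysis.Analysis"
begin

text \<open>Complex-bilinear extension of the Euclidean inner product to C^n.\<close>
definition cbil :: "complex^'n \<Rightarrow> complex^'n \<Rightarrow> complex" where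
  "cbil x y = (\<Sum>i\<in>UNIV. x$i * y$i)"

definition real_homog_quadratic_map :: "(complex^'n \<Rightarrow> complex^'n) \<Rightarrow> bool" where
  "real_homog_quadratic_map G \<longleftrightarrow>
     (\<exists>c :: 'n \<Rightarrow> 'n \<Rightarrow> 'n \<Rightarrow> real. \<forall>x k.
        G x $ k = (\<Sum>i\<in>UNIV. \<Sum>j\<in>UNIV. complex_of_real (c k i j) * x$i * x$j))"

definition cdependent2 :: "complex^'n \<Rightarrow> complex^'n \<Rightarrow> bool" where
  "cdependent2 u v \<longleftrightarrow> (\<exists>a b :: complex. (a \<noteq> 0 \<or> b \<noteq> 0) \<and> a *s u + b *s v = 0)"

definition cvec :: "real^'n \<Rightarrow> complex^'n" where
  "cvec b = (\<chi> i. complex_of_real (b$i))"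

definition cext :: "(real^'n \<Rightarrow> real) \<Rightarrow> complex^'n \<Rightarrow> complex" where
  "cext l x = (\<Sum>i\<in>UNIV. complex_of_real (l (axis i 1)) * x$i)"

end

theory Submission
  imports Defs
begin

lemma exists_other:
  fixes k :: 'n
  assumes "CARD('n) \<ge> 2"
  shows "\<exists>p::'n. p \<noteq> k"
proof (rule ccontr)
  assume "\<not> (\<exists>p::'n. p \<noteq> k)"
  then have u: "(UNIV::'n set) = {k}" by auto
  have "card (UNIV::'n set) = card {k}" by (simp only: u)
  then have "CARD('n) = 1" by simp
  with assms show False by simp
qed

lemma inner2:
  fixes f :: "'n::finite \<Rightarrow> complex"
  shows "(\<Sum>j\<in>UNIV. f j * ((if j = p then 1 else 0) + (if j = q then \<i> else 0))) = f p + \<i> * f q"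
proof -
  have "\<And>j. f j * ((if j = p then 1 else 0) + (if j = q then \<i> else 0))
    = (if j = p then f j else 0) + (if j = q then \<i> * f j else 0)" by (simp add: algebra_simps)
  then have "(\<Sum>j\<in>UNIV. f j * ((if j = p then 1 else 0) + (if j = q then \<i> else 0)))
    = (\<Sum>j\<in>UNIV. (if j = p then f j else 0) + (if j = q then \<i> * f j else 0))"
    by presburger
  also have "\<dots> = (\<Sum>j\<in>UNIV. (if j = p then f j else 0)) + (\<Sum>j\<in>UNIV. (if j = q then \<i> * f j else 0))"
    by (rule sum.distrib)
  finally show ?thesis by simp
qed

lemma eval_pq:
  fixes s :: "'n::finite \<Rightarrow> 'n \<Rightarrow> 'n \<Rightarrow> real"
  assumes "p \<noteq> q" and sym: "\<And>k i j. s k i j = s k j i"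
  shows "(\<Sum>i\<in>UNIV. \<Sum>j\<in>UNIV. complex_of_real (s k i j) *
            (\<chi> t. if t = p then 1 else if t = q then \<i> else 0)$i *
            (\<chi> t. if t = p then 1 else if t = q then \<i> else 0)$j)
         = Complex (s k p p - s k q q) (2 * s k p q)"
proof -
  have e: "\<And>t. (if t = p then 1 else if t = q then \<i> else (0::complex))
      = (if t = p then 1 else 0) + (if t = q then \<i> else 0)" using assms(1) by auto
  have "(\<Sum>i\<in>UNIV. \<Sum>j\<in>UNIV. complex_of_real (s k i j) *
            (\<chi> t. if t = p then 1 else if t = q then \<i> else 0)$i *
            (\<chi> t. if t = p then 1 else if t = q then \<i> else 0)$j)
     = (\<Sum>i\<in>UNIV. ((if i = p then 1 else 0) + (if i = q then \<i> else 0)) * (\<Sum>j\<in>UNIV. complex_of_real (s k i j) *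
            ((if j = p then 1 else 0) + (if j = q then \<i> else 0))))"
    by (simp only: vec_lambda_beta e sum_distrib_left) (simp add: algebra_simps)
  also have "\<dots> = (\<Sum>i\<in>UNIV. (complex_of_real (s k i p) + \<i> * complex_of_real (s k i q)) *
            ((if i = p then 1 else 0) + (if i = q then \<i> else 0)))"
    by (simp only: inner2 mult.commute)
  also have "\<dots> = of_real (s k p p) + \<i> * of_real (s k p q) + \<i> * (of_real (s k q p)
       + \<i> * of_real (s k q q))"
    by (rule inner2)
  also have "\<dots> = Complex (s k p p - s k q q) (2 * s k p q)"
    using sym[of k q p] by (simp add: complex_eq_iff)
  finally show ?thesis .
qed

lemma final_sum:
  fixes B :: complex and L x :: "'n::finite \<Rightarrow> complex"
  shows "(\<Sum>i\<in>UNIV. \<Sum>j\<in>UNIV. ((if i=j then B else 0) + (if j=k then L i/2 else 0) + (if i=k then L j/2 else 0)) * x i * x j)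
    = B * (\<Sum>i\<in>UNIV. x i * x i) + (\<Sum>i\<in>UNIV. L i * x i) * x k"
proof -
  have pw: "\<And>i j. ((if i=j then B else 0) + (if j=k then L i/2 else 0) + (if i=k then L j/2 else 0)) * x i * x j
     = (if i=j then B * x i * x j else 0) + (if j=k then L i/2 * x i * x j else 0) + (if i=k then L j/2 * x i * x j else 0)"
    by (simp add: algebra_simps)
  have inner: "\<And>i. (\<Sum>j\<in>UNIV. ((if i=j then B else 0) + (if j=k then L i/2 else 0) + (if i=k then L j/2 else 0)) * x i * x j)
     = B * x i * x i + L i/2 * x i * x k + (if i = k then (\<Sum>j\<in>UNIV. L j/2 * x i * x j) else 0)"
    by (simp only: pw sum.distrib) (simp add: sum.delta')
  have "(\<Sum>i\<in>UNIV. \<Sum>j\<in>UNIV. ((if i=j then B else 0) + (if j=k then L i/2 else 0) + (if i=k then L j/2 else 0)) * x i * x j)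
     = (\<Sum>i\<in>UNIV. B * x i * x i + L i/2 * x i * x k + (if i = k then (\<Sum>j\<in>UNIV. L j/2 * x i * x j) else 0))"
    by (simp only: inner)
  also have "\<dots> = B * (\<Sum>i\<in>UNIV. x i * x i) + (\<Sum>i\<in>UNIV. L i * x i) * x k / 2 + (\<Sum>j\<in>UNIV. L j/2 * x k * x j)"
    by (simp add: sum.distrib sum_distrib_left sum_distrib_right mult.assoc)
  also have "\<dots> = B * (\<Sum>i\<in>UNIV. x i * x i) + (\<Sum>i\<in>UNIV. L i * x i) * x k"
    by (simp add: sum_distrib_left sum_distrib_right sum_divide_distrib algebra_simps)
  finally show ?thesis .
qed

theorem lemma3:
  fixes \<Gamma> :: "complex^'n \<Rightarrow> complex^'n"
  assumes "CARD('n) \<ge> 2"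
    and "real_homog_quadratic_map \<Gamma>"
    and "\<And>x. cbil x x = 0 \<Longrightarrow> cdependent2 (\<Gamma> x) x"
  shows "\<exists>(b :: real^'n) (l :: real^'n \<Rightarrow> real). linear l \<and>
           (\<forall>x. \<Gamma> x = cbil x x *s cvec b + cext l x *s x)"
proof -
  obtain c :: "'n \<Rightarrow> 'n \<Rightarrow> 'n \<Rightarrow> real" where c: "\<And>x k.
        \<Gamma> x $ k = (\<Sum>i\<in>UNIV. \<Sum>j\<in>UNIV. complex_of_real (c k i j) * x$i * x$j)"
    using assms(2) unfolding real_homog_quadratic_map_def by blast
  define s where "s k i j = (c k i j + c k j i) / 2" for k i j
  have sym: "\<And>k i j. s k i j = s k j i" unfolding s_def by simp
  have Gs: "\<Gamma> x $ k = (\<Sum>i\<in>UNIV. \<Sum>j\<in>UNIV. complex_of_real (s k i j) * x$i * x$j)" for x k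
  proof -
    have sw: "(\<Sum>i\<in>UNIV. \<Sum>j\<in>UNIV. complex_of_real (c k j i) * x$i * x$j)
        = (\<Sum>i\<in>UNIV. \<Sum>j\<in>UNIV. complex_of_real (c k i j) * x$i * x$j)"
      by (subst sum.swap) (simp add: mult.commute mult.left_commute)
    have "(\<Sum>i\<in>UNIV. \<Sum>j\<in>UNIV. complex_of_real (s k i j) * x$i * x$j)
       = ((\<Sum>i\<in>UNIV. \<Sum>j\<in>UNIV. complex_of_real (c k i j) * x$i * x$j)
         + (\<Sum>i\<in>UNIV. \<Sum>j\<in>UNIV. complex_of_real (c k j i) * x$i * x$j)) / 2"
      unfolding s_def by (simp add: sum_divide_distrib sum.distrib algebra_simps add_divide_distrib)
    then show ?thesis using sw c by simp
  qed
  have key: "(k \<noteq> p \<longrightarrow> k \<noteq> q \<longrightarrow> s k p p = s k q q \<and> s k p q = 0) \<and> 2 * s q p q = s p p p - s p q q"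
    if pq: "p \<noteq> q" for p q k
  proof -
    define x :: "complex^'n" where "x = (\<chi> t. if t = p then 1 else if t = q then \<i> else 0)"
    have e: "\<And>t. x $ t = (if t = p then 1 else 0) + (if t = q then \<i> else 0)"
      unfolding x_def using pq by auto
    have "cbil x x = x$p + \<i> * x$q"
      unfolding cbil_def e by (rule inner2)
    also have "\<dots> = 0" using pq by (simp add: e)
    finally have "cdependent2 (\<Gamma> x) x" using assms(3) by blast
    then obtain a b :: complex where ab: "a \<noteq> 0 \<or> b \<noteq> 0" "a *s \<Gamma> x + b *s x = 0"
      unfolding cdependent2_def by blast
    have comp: "a * \<Gamma> x $ t + b * x $ t = 0" for t
      using ab(2) by (metis vector_add_component vector_smult_component zero_index)
    have "a \<noteq> 0"
    proof
      assume "a = 0"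
      with comp[of p] have "b = 0" using pq by (simp add: e)
      with ab(1) \<open>a = 0\<close> show False by simp
    qed
    define \<mu> where "\<mu> = - b / a"
    have G: "\<Gamma> x $ t = \<mu> * x $ t" for t
      using comp[of t] \<open>a \<noteq> 0\<close> unfolding \<mu>_def by (simp add: field_simps eq_neg_iff_add_eq_0)
    have ev: "\<Gamma> x $ t = Complex (s t p p - s t q q) (2 * s t p q)" for t
      unfolding Gs x_def by (rule eval_pq[OF pq sym])
    have 1: "k \<noteq> p \<longrightarrow> k \<noteq> q \<longrightarrow> s k p p = s k q q \<and> s k p q = 0"
    proof (intro impI)
      assume "k \<noteq> p" "k \<noteq> q"
      then have "\<Gamma> x $ k = 0" using G by (simp add: e)
      then show "s k p p = s k q q \<and> s k p q = 0" using ev[of k] by (simp add: complex_eq_iff)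
    qed
    have "\<Gamma> x $ q = \<i> * \<Gamma> x $ p" using G pq by (simp add: e)
    then have "Complex (s q p p - s q q q) (2 * s q p q) = \<i> * Complex (s p p p - s p q q) (2 * s p p q)"
      using ev by simp
    then have "2 * s q p q = s p p p - s p q q" by (simp add: complex_eq_iff)
    with 1 show ?thesis by blast
  qed
  define b where "b k = s k (SOME p. p \<noteq> k) (SOME p. p \<noteq> k)" for k
  define lam where "lam k = s k k k - b k" for k
  have bk: "s k i i = b k" if "i \<noteq> k" for i k
  proof -
    have "(SOME p. p \<noteq> k) \<noteq> k" using someI_ex[OF exists_other[OF assms(1), of k]] .
    then show ?thesis unfolding b_def using key[of i "SOME p. p \<noteq> k" k] that by metis
  qed
  have sform: "s k i j = (if i=j then b k else 0) + (if j=k then lam i/2 else 0) + (if i=k then lam j/2 else 0)"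
    for k i j
  proof (cases "i = j")
    case True
    then show ?thesis using bk[of i k] unfolding lam_def by auto
  next
    case ij: False
    show ?thesis
    proof (cases "i = k")
      case True
      have "2 * s k j k = s j j j - s j k k" using key[of j k] ij True by auto
      then show ?thesis using True ij bk[of k j] sym[of k k j] unfolding lam_def by auto
    next
      case ik: False
      show ?thesis
      proof (cases "j = k")
        case True
        have "2 * s k i k = s i i i - s i k k" using key[of i k] ij True by auto
        then show ?thesis using True ij ik bk[of k i] unfolding lam_def by auto
      next
        case False
        then show ?thesis using key[of i j k] ij ik by auto
      qed
    qed
  qed
  define l where "l y = (\<Sum>i\<in>UNIV. lam i * y $ i)" for y :: "real^'n"
  have lin: "linear l"
    by (rule linearI) (simp_all add: l_def sum.distrib sum_distrib_left algebra_simps)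
  have lax: "l (axis i 1) = lam i" for i
    unfolding l_def axis_def by (simp add: if_distrib sum.delta cong: if_cong)
  have "\<Gamma> x = cbil x x *s cvec (\<chi> k. b k) + cext l x *s x" for x
  proof (subst vec_eq_iff, intro allI)
    fix k
    have "\<Gamma> x $ k = (\<Sum>i\<in>UNIV. \<Sum>j\<in>UNIV. ((if i=j then complex_of_real (b k) else 0)
        + (if j=k then complex_of_real (lam i)/2 else 0) + (if i=k then complex_of_real (lam j)/2 else 0)) * x$i * x$j)"
      unfolding Gs by (intro sum.cong refl) (simp add: sform)
    also have "\<dots> = complex_of_real (b k) * (\<Sum>i\<in>UNIV. x$i * x$i) + (\<Sum>i\<in>UNIV. complex_of_real (lam i) * x$i) * x$k"
      by (rule final_sum)
    also have "\<dots> = (cbil x x *s cvec (\<chi> k. b k) + cext l x *s x) $ k"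
      by (simp add: cbil_def cext_def cvec_def lax mult.commute)
    finally show "\<Gamma> x $ k = (cbil x x *s cvec (\<chi> k. b k) + cext l x *s x) $ k" .
  qed
  then show ?thesis using lin by blast
qed

end
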